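(* Let $T>0$, let $f,h,g:[0,T]\to\mathbb{R}$ be continuous with $g_t>0$ for all $t\in[0,T]$, and let $\mathbf{m},x_T\in\mathbb{R}^d$. Define $\bar f_{s:t}=\int_s^t f_z\,dz$, $\bar f_t=\bar f_{0:t}$, $\bar h_{s:t}=\int_s^t e^{-\bar f_z}h_z\,dz$, $\bar g^2_{s:t}=\int_s^t e^{-2\bar f_z}g_z^2\,dz$, and for $\gamma\in(0,\infty)$ let $d_{t,\gamma}=\gamma^{-1}+e^{2\bar f_T}\bar g^2_{t:T}$ and $$\mathbf{u}^*_{t,\gamma}(\mathbf{x})=g_t e^{\bar f_{t:T}}\,\frac{x_T-e^{\bar f_{t:T}}\mathbf{x}-\mathbf{m}\,e^{\bar f_T}\bar h_{t:T}}{d_{t,\gamma}},\qquad t\in[0,T],\ \mathbf{x}\in\mathbb{R}^d,$$ which is the optimal feedback controller of the problem of minimizing $\int_0^T\frac12\|\mathbf{u}_{t,\gamma}\|_2^2dt+\frac\gamma2\|\mathbf{x}^u_T-x_T\|_2^2$ subject to $d\mathbf{x}_t=(f_t\mathbf{x}_t+h_t\mathbf{m}+g_t\mathbf{u}_{t,\gamma})dt$. Let $p(\mathbf{x}_T\mid\mathbf{x}_t)$ denote the transition density of the uncontrolled linear SDE $d\mathbf{x}_t=(f_t\mathbf{x}_t+h_t\mathbf{m})dt+g_t\,d\mathbf{w}_t$, with $\mathbf{w}_t$ a standard $d$-dimensional Brownian motion. Then for every $t\in[0,T)$ and $\mathbf{x}\in\mathbb{R}^d$, $$\mathbf{u}^*_{t,\infty}(\mathbf{x}):=\lim_{\gamma\to\infty}\mathbf{u}^*_{t,\gamma}(\mathbf{x})=g_t\,\nabla_{\mathbf{x}}\log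 p(x_T\mid\mathbf{x}_t=\mathbf{x}).$$ Consequently, the controlled forward SDE $d\mathbf{x}_t=(f_t\mathbf{x}_t+h_t\mathbf{m}+g_t\mathbf{u}^*_{t,\infty}(\mathbf{x}_t))dt+g_t\,d\mathbf{w}_t$ coincides with the Doob $h$-transformed SDE $d\mathbf{x}_t=[f_t\mathbf{x}_t+h_t\mathbf{m}+g_t^2\nabla_{\mathbf{x}_t}\log p(x_T\mid\mathbf{x}_t)]dt+g_t\,d\mathbf{w}_t$, and the associated reverse-time SDE $d\mathbf{x}_t=[f_t\mathbf{x}_t+h_t\mathbf{m}+g_t\mathbf{u}^*_{t,\infty}(\mathbf{x}_t)-g_t^2\nabla_{\mathbf{x}_t}\log p(\mathbf{x}_t\mid x_T)]dt+g_t\,d\tilde{\mathbf{w}}_t$ coincides with the Doob $h$-transform reverse SDE $d\mathbf{x}_t=[f_t\mathbf{x}_t+h_t\mathbf{m}+g_t^2\nabla_{\mathbf{x}_t}\log p(x_T\mid\mathbf{x}_t)-g_t^2\nabla_{\mathbf{x}_t}\log p(\mathbf{x}_t\mid x_T)]dt+g_t\,d\tilde{\mathbf{w}}_t$.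
   Context: $\tilde{\mathbf{w}}_t$ denotes a reverse-time Brownian motion and $p(\mathbf{x}_t\mid x_T)$ the conditional density of the bridge process at time $t$ given its terminal value; these terms appear identically on both sides. The Doob $h$-transform of a diffusion $d\mathbf{x}_t=\mathbf{f}(\mathbf{x}_t,t)dt+g_td\mathbf{w}_t$ toward a fixed endpoint $x_T$ is the diffusion with drift augmented by $g_t^2\nabla_{\mathbf{x}_t}\log p(x_T\mid\mathbf{x}_t)$. *)

theory Defs
  imports "HOL-Analysis.Analysis" "HOL-Probability.Distributions"
begin

definition fbar :: "(real \<Rightarrow> real) \<Rightarrow> real \<Rightarrow> real \<Rightarrow> real" where
  "fbar f s t = integral {s..t} f"

definition hbar :: "(real \<Rightarrow> real) \<Rightarrow> (real \<Rightarrow> real) \<Rightarrow> real \<Rightarrow> real \<Rightarrow> real" where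
  "hbar f h s t = integral {s..t} (\<lambda>z. exp (- fbar f 0 z) * h z)"

definition gbar2 :: "(real \<Rightarrow> real) \<Rightarrow> (real \<Rightarrow> real) \<Rightarrow> real \<Rightarrow> real \<Rightarrow> real" where
  "gbar2 f g s t = integral {s..t} (\<lambda>z. exp (- 2 * fbar f 0 z) * (g z)\<^sup>2)"

definition d_gamma :: "(real \<Rightarrow> real) \<Rightarrow> (real \<Rightarrow> real) \<Rightarrow> real \<Rightarrow> real \<Rightarrow> real \<Rightarrow> real" where
  "d_gamma f g T \<gamma> t = 1 / \<gamma> + exp (2 * fbar f 0 T) * gbar2 f g t T"

definition u_star ::
  "(real \<Rightarrow> real) \<Rightarrow> (real \<Rightarrow> real) \<Rightarrow> (real \<Rightarrow> real) \<Rightarrow> real ^ 'd \<Rightarrow> real ^ 'd \<Rightarrow> real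
    \<Rightarrow> real \<Rightarrow> real \<Rightarrow> real ^ 'd \<Rightarrow> real ^ 'd" where
  "u_star f h g m xT T \<gamma> t x =
     (g t * exp (fbar f t T) / d_gamma f g T \<gamma> t) *\<^sub>R
       (xT - exp (fbar f t T) *\<^sub>R x - (exp (fbar f 0 T) * hbar f h t T) *\<^sub>R m)"

text \<open>Transition density p(y | x_t = x) at the terminal time T of the uncontrolled linear SDE
  dx = (f x + h m) dt + g dw.  Its unique solution started at x at time t is
  x_T = e^{fbar_{t:T}} x + (int_t^T e^{fbar_{s:T}} h_s ds) m + int_t^T e^{fbar_{s:T}} g_s dw_s,
  a Gaussian with independent coordinates, mean as below and variance
  int_t^T e^{2 fbar_{s:T}} g_s^2 ds in each coordinate.\<close>
definition sde_mean ::
  "(real \<Rightarrow> real) \<Rightarrow> (real \<Rightarrow> real) \<Rightarrow> real ^ 'd \<Rightarrow> real \<Rightarrow> real \<Rightarrow> real ^ 'd \<Rightarrow> real ^ 'd" where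
  "sde_mean f h m T t x =
     exp (fbar f t T) *\<^sub>R x + integral {t..T} (\<lambda>s. exp (fbar f s T) * h s) *\<^sub>R m"

definition sde_var :: "(real \<Rightarrow> real) \<Rightarrow> (real \<Rightarrow> real) \<Rightarrow> real \<Rightarrow> real \<Rightarrow> real" where
  "sde_var f g T t = integral {t..T} (\<lambda>s. exp (2 * fbar f s T) * (g s)\<^sup>2)"

definition trans_density ::
  "(real \<Rightarrow> real) \<Rightarrow> (real \<Rightarrow> real) \<Rightarrow> (real \<Rightarrow> real) \<Rightarrow> real ^ 'd \<Rightarrow> real \<Rightarrow> real
    \<Rightarrow> real ^ 'd \<Rightarrow> real ^ 'd \<Rightarrow> real" where
  "trans_density f h g m T t x y =
     (\<Prod>i\<in>UNIV. normal_density (sde_mean f h m T t x $ i) (sqrt (sde_var f g T t)) (y $ i))"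

end

theory Submission
  imports Defs
begin

theorem theorem4p2:
  fixes f h g :: "real \<Rightarrow> real" and T t :: real and m xT x :: "real ^ 'd"
  assumes "T > 0"
    and "continuous_on {0..T} f" and "continuous_on {0..T} h" and "continuous_on {0..T} g"
    and "\<And>s. s \<in> {0..T} \<Longrightarrow> g s > 0"
    and "t \<in> {0..<T}"
  shows "\<exists>G :: real ^ 'd.
           ((\<lambda>y. ln (trans_density f h g m T t y xT)) has_derivative (\<lambda>v. G \<bullet> v)) (at x)
         \<and> ((\<lambda>\<gamma>. u_star f h g m xT T \<gamma> t x) \<longlongrightarrow> g t *\<^sub>R G) at_top
         \<and> f t *\<^sub>R x + h t *\<^sub>R m + g t *\<^sub>R Lim at_top (\<lambda>\<gamma>. u_star f h g m xT T \<gamma> t x)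
             = f t *\<^sub>R x + h t *\<^sub>R m + (g t)\<^sup>2 *\<^sub>R G
         \<and> (\<forall>S :: real ^ 'd.
              f t *\<^sub>R x + h t *\<^sub>R m + g t *\<^sub>R Lim at_top (\<lambda>\<gamma>. u_star f h g m xT T \<gamma> t x)
                - (g t)\<^sup>2 *\<^sub>R S
              = f t *\<^sub>R x + h t *\<^sub>R m + (g t)\<^sup>2 *\<^sub>R G - (g t)\<^sup>2 *\<^sub>R S)"
proof -
  have tT: "0 \<le> t" "t < T" using assms(6) by auto
  have fi: "f integrable_on {0..T}" using assms(2) by (rule integrable_continuous_interval)
  have comb: "fbar f 0 T = fbar f 0 z + fbar f z T" if "z \<in> {0..T}" for z
    using Henstock_Kurzweil_Integration.integral_combine[of 0 z T f] that fi
    unfolding fbar_def by auto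
  have cF: "continuous_on {0..T} (\<lambda>z. fbar f 0 z)"
    unfolding fbar_def by (rule indefinite_integral_continuous_1[OF fi])
  define F where "F = fbar f 0 T"
  define a where "a = fbar f t T"
  define V where "V = sde_var f g T t"
  define k where "k = (\<lambda>z. exp (- 2 * fbar f 0 z) * (g z)\<^sup>2)"
  have V_eq: "V = exp (2 * F) * gbar2 f g t T"
  proof -
    have "V = integral {t..T} (\<lambda>s. exp (2 * F) * k s)"
      unfolding V_def sde_var_def
    proof (rule integral_cong)
      fix s assume "s \<in> {t..T}"
      then have "F = fbar f 0 s + fbar f s T" using comb[of s] tT unfolding F_def by auto
      then show "exp (2 * fbar f s T) * (g s)\<^sup>2 = exp (2 * F) * k s"
        unfolding k_def by (simp add: mult_exp_exp[symmetric] exp_minus_inverse algebra_simps)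
    qed
    also have "\<dots> = exp (2 * F) * gbar2 f g t T" unfolding gbar2_def k_def by simp
    finally show ?thesis .
  qed
  have c_eq: "integral {t..T} (\<lambda>s. exp (fbar f s T) * h s) = exp F * hbar f h t T"
  proof -
    have "integral {t..T} (\<lambda>s. exp (fbar f s T) * h s)
        = integral {t..T} (\<lambda>s. exp F * (exp (- fbar f 0 s) * h s))"
    proof (rule integral_cong)
      fix s assume "s \<in> {t..T}"
      then have "F = fbar f 0 s + fbar f s T" using comb[of s] tT unfolding F_def by auto
      then show "exp (fbar f s T) * h s = exp F * (exp (- fbar f 0 s) * h s)"
        by (simp add: mult_exp_exp[symmetric] exp_minus_inverse algebra_simps)
    qed
    also have "\<dots> = exp F * hbar f h t T" unfolding hbar_def by simp
    finally show ?thesis .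
  qed
  have gpos: "gbar2 f g t T > 0"
  proof -
    have ck: "continuous_on {t..T} k"
    proof -
      have "continuous_on {0..T} k" unfolding k_def
        by (intro continuous_intros cF assms(4))
      then show ?thesis by (rule continuous_on_subset) (use tT in auto)
    qed
    obtain z0 where z0: "z0 \<in> {t..T}" "\<And>y. y \<in> {t..T} \<Longrightarrow> k z0 \<le> k y"
      using continuous_attains_inf[OF compact_Icc _ ck] tT by auto
    have kz0: "k z0 > 0" unfolding k_def using assms(5)[of z0] z0(1) tT by auto
    have "integral {t..T} (\<lambda>_. k z0) \<le> integral {t..T} k"
      by (rule integral_le) (use z0 ck integrable_continuous_interval in auto)
    moreover have "integral {t..T} (\<lambda>_. k z0) = (T - t) * k z0" using tT by simp
    moreover have "(T - t) * k z0 > 0" using tT kz0 by simp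
    ultimately have "integral {t..T} k > 0" by linarith
    then show ?thesis unfolding gbar2_def k_def by simp
  qed
  have Vpos: "V > 0" using V_eq gpos by simp

  define c where "c = exp F * hbar f h t T"
  have mean: "sde_mean f h m T t y = exp a *\<^sub>R y + c *\<^sub>R m" for y
    unfolding sde_mean_def a_def c_def using c_eq by simp
  define L where "L = ln (sqrt (2 * pi * V))"
  define G where "G = (exp a / V) *\<^sub>R (xT - sde_mean f h m T t x)"
  have lnp: "ln (trans_density f h g m T t y xT)
      = (\<Sum>i\<in>UNIV. - (xT $ i - (exp a * y $ i + c * m $ i))\<^sup>2 / (2 * V) - L)" for y
  proof -
    have sq: "(sqrt (sde_var f g T t))\<^sup>2 = V" using Vpos unfolding V_def by simp
    have nd: "normal_density (sde_mean f h m T t y $ i) (sqrt (sde_var f g T t)) (xT $ i)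
        = 1 / sqrt (2 * pi * V) * exp (- (xT $ i - (exp a * y $ i + c * m $ i))\<^sup>2 / (2 * V))" for i
      unfolding normal_density_def sq mean by simp
    have pos: "1 / sqrt (2 * pi * V) * exp (- (xT $ i - (exp a * y $ i + c * m $ i))\<^sup>2 / (2 * V)) > 0" for i
      using Vpos by simp
    have "ln (trans_density f h g m T t y xT)
       = (\<Sum>i\<in>UNIV. ln (1 / sqrt (2 * pi * V) * exp (- (xT $ i - (exp a * y $ i + c * m $ i))\<^sup>2 / (2 * V))))"
      unfolding trans_density_def nd
      by (rule ln_prod) (use pos in \<open>auto simp del: divide_const_simps\<close>)
    also have "\<dots> = (\<Sum>i\<in>UNIV. - (xT $ i - (exp a * y $ i + c * m $ i))\<^sup>2 / (2 * V) - L)"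
    proof (rule sum.cong[OF refl])
      fix i
      have "sqrt (2 * pi * V) > 0" using Vpos by simp
      then show "ln (1 / sqrt (2 * pi * V) * exp (- (xT $ i - (exp a * y $ i + c * m $ i))\<^sup>2 / (2 * V)))
          = - (xT $ i - (exp a * y $ i + c * m $ i))\<^sup>2 / (2 * V) - L"
        unfolding L_def by (simp add: ln_mult ln_div)
    qed
    finally show ?thesis .
  qed
  have deriv: "((\<lambda>y. ln (trans_density f h g m T t y xT)) has_derivative (\<lambda>v. G \<bullet> v)) (at x)"
  proof -
    have "((\<lambda>y. \<Sum>i\<in>UNIV. - (xT $ i - (exp a * y $ i + c * m $ i))\<^sup>2 / (2 * V) - L)
        has_derivative (\<lambda>v. \<Sum>i\<in>UNIV. G $ i * v $ i)) (at x)"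
    proof (rule has_derivative_sum)
      fix i :: 'd
      have l: "((\<lambda>y. y $ i) has_derivative (\<lambda>y. y $ i)) (at x)"
        by (rule bounded_linear_imp_has_derivative[OF bounded_linear_vec_nth])
      define r where "r = xT $ i - c * m $ i"
      have r: "((\<lambda>y. r - exp a * y $ i) has_derivative (\<lambda>v. 0 - exp a * v $ i)) (at x)"
        by (intro has_derivative_diff has_derivative_const has_derivative_mult_right l)
      have r2: "((\<lambda>y. (r - exp a * y $ i) * (r - exp a * y $ i)) has_derivative
          (\<lambda>v. (r - exp a * x $ i) * (0 - exp a * v $ i) + (0 - exp a * v $ i) * (r - exp a * x $ i))) (at x)"
        by (rule has_derivative_mult[OF r r])
      have r3: "((\<lambda>y. (- 1 / (2 * V)) * ((r - exp a * y $ i) * (r - exp a * y $ i)) - L) has_derivative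
          (\<lambda>v. (- 1 / (2 * V)) * ((r - exp a * x $ i) * (0 - exp a * v $ i) + (0 - exp a * v $ i) * (r - exp a * x $ i)) - 0)) (at x)"
        by (intro has_derivative_diff has_derivative_const has_derivative_mult_right r2)
      have fe: "(\<lambda>y. - (xT $ i - (exp a * y $ i + c * m $ i))\<^sup>2 / (2 * V) - L)
          = (\<lambda>y. (- 1 / (2 * V)) * ((r - exp a * y $ i) * (r - exp a * y $ i)) - L)"
      proof
        fix y
        have e: "xT $ i - (exp a * y $ i + c * m $ i) = r - exp a * y $ i" unfolding r_def by simp
        show "- (xT $ i - (exp a * y $ i + c * m $ i))\<^sup>2 / (2 * V) - L
            = (- 1 / (2 * V)) * ((r - exp a * y $ i) * (r - exp a * y $ i)) - L"
          unfolding e by (simp add: power2_eq_square)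
      qed
      have de: "(\<lambda>v. G $ i * v $ i)
          = (\<lambda>v. (- 1 / (2 * V)) * ((r - exp a * x $ i) * (0 - exp a * v $ i) + (0 - exp a * v $ i) * (r - exp a * x $ i)) - 0)"
        using Vpos unfolding G_def mean r_def by (auto simp: fun_eq_iff field_simps)
      show "((\<lambda>y. - (xT $ i - (exp a * y $ i + c * m $ i))\<^sup>2 / (2 * V) - L)
          has_derivative (\<lambda>v. G $ i * v $ i)) (at x)"
        unfolding fe de by (rule r3)
    qed
    then show ?thesis unfolding lnp[abs_def] inner_vec_def by simp
  qed
  have ulim: "((\<lambda>\<gamma>. u_star f h g m xT T \<gamma> t x) \<longlongrightarrow> g t *\<^sub>R G) at_top"
  proof -
    have d: "d_gamma f g T \<gamma> t = 1 / \<gamma> + V" for \<gamma>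
      unfolding d_gamma_def V_eq F_def ..
    have u: "u_star f h g m xT T \<gamma> t x = (g t * exp a / (1 / \<gamma> + V)) *\<^sub>R (xT - sde_mean f h m T t x)" for \<gamma>
      unfolding u_star_def d mean a_def c_def F_def by (simp add: algebra_simps)
    have "((\<lambda>\<gamma>::real. 1 / \<gamma>) \<longlongrightarrow> 0) at_top"
      by (intro tendsto_divide_0[OF tendsto_const] filterlim_at_top_imp_at_infinity filterlim_ident)
    then have "((\<lambda>\<gamma>::real. (g t * exp a / (1 / \<gamma> + V)) *\<^sub>R (xT - sde_mean f h m T t x))
        \<longlongrightarrow> (g t * exp a / (0 + V)) *\<^sub>R (xT - sde_mean f h m T t x)) at_top"
      using Vpos by (intro tendsto_intros) auto
    moreover have "(g t * exp a / (0 + V)) *\<^sub>R (xT - sde_mean f h m T t x) = g t *\<^sub>R G"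
      unfolding G_def by simp
    ultimately show ?thesis unfolding u by simp
  qed
  have Lim: "Lim at_top (\<lambda>\<gamma>. u_star f h g m xT T \<gamma> t x) = g t *\<^sub>R G"
    using ulim by (intro tendsto_Lim) auto
  show ?thesis
    by (rule exI[of _ G]) (simp add: deriv ulim Lim power2_eq_square)
qed

end
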